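(* Under Assumptions 1, 2 and 3, let $\lambda_1,\lambda_2>0$, let $(\hat S,\hat L)$ be as in the context and $\Delta L=L^*-\hat L$. Then, with probability at least $1-2e^{-\tilde\nu_n\gamma_n sn}$, $$\Big|\big\langle \Omega\odot(A-\hat S-\hat S^\top)_{|O}\,\big|\,\Delta L\big\rangle\Big|\le 16\,\tilde\nu_n\gamma_n\rho_n ns,$$ where $\langle M|N\rangle=\sum_{i,j}M_{ij}N_{ij}$.
   Context: Let $n\ge2$ and let $[n]=\mathcal I\sqcup\mathcal O$ be a partition into inliers $\mathcal I$ and outliers $\mathcal O$, $s=|\mathcal O|$. Write $I=\mathcal I\times\mathcal I$ and $O=([n]\times[n])\setminus I$. For $M\in\mathbb R^{n\times n}$ and $\mathcal S\subset[n]\times[n]$, $M_{|\mathcal S}=\mathbb 1_{\mathcal S}\odot M$ ($\odot$ entrywise product, $\mathbb 1_{\mathcal S}$ indicator matrix). Let $\rho_n\in(0,1/2]$, $\gamma_n\in(0,1]$, $k\ge1$. $L^*$ is a symmetric $n\times n$ matrix of rank $k$ with entries in $[0,\rho_n]$ and $L^*_{ij}=0$ whenever $i\in\mathcal O$ or $j\in\mathcal O$. $S^*$ is an $n\times n$ matrix with entries in $[0,\gamma_n]$, zero diagonal, $S^*_{\cdot,j}=0$ for all $j\in\mathcal I$, and $L^*+S^*+(S^* )^\top$ has entries in $[0,1]$. The adjacency matrix $A$ is symmetric with zero diagonal and $(A_{ij})_{i<j}$ are independent, $A_{ij}\sim\mathrm{Bernoulli}((L^*+S^*+(S^* )^\top)_{ij})$.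 The sampling matrix $\Omega$ is symmetric with zero diagonal, $(\Omega_{ij})_{i<j}$ are independent $\mathrm{Bernoulli}(\Pi_{ij})$, $\Omega$ independent of $A$, $\Pi=\mathbb E[\Omega]$. Norms: $\|M\|_{2,1}=\sum_j(\sum_iM_{ij}^2)^{1/2}$, $\|\cdot\|_F$ Frobenius, $\|\cdot\|_*$ nuclear. Assumption 1: there is $\mu_n>0$ with $\Pi_{ij}\ge\mu_n$ for all $(i,j)\in I$, $i\neq j$; and $\nu_n,\tilde\nu_n\in(0,1]$ satisfy $\sum_{j\in\mathcal I}\Pi_{ij}\le\nu_n n$ for all $i\in\mathcal I$ and $\sum_{j\in\mathcal O}\Pi_{ij}\le\tilde\nu_n s$ for all $i\in[n]$. Assumption 2: $\nu_n\rho_n\ge\log(n)/n$ and $\tilde\nu_n\gamma_n\ge\log(n)/n$. Assumption 3: $\nu_n\rho_n n\ge\tilde\nu_n\gamma_n s$. Estimator: for $\lambda_1,\lambda_2>0$, $\mathcal F(S,L)=\frac12\|\Omega\odot(A-L-S-S^\top)\|_F^2+\lambda_1\|L\|_*+\lambda_2\|S\|_{2,1}$; $(\hat S,\hat L)$ is any minimizer of $\mathcal F$ over $S\in[0,1]^{n\times n}$ and symmetric $L\in[0,\rho_n]^{n\times n}$, and (standing assumption that the upper box constraint on $S$ is inactive) $\hat S$ also minimizes $S\mapsto\mathcal F(S,\hat L)$ over nonnegative $S\in\mathbb R_+^{n\times n}$. *)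

theory Defs
  imports "HOL-Analysis.Analysis" "HOL-Probability.Probability"
begin

definition diag_mat :: "('n::finite \<Rightarrow> real) \<Rightarrow> real^'n^'n" where
  "diag_mat \<sigma> = (\<chi> i j. if i = j then \<sigma> i else 0)"

text \<open>Nuclear norm = sum of the singular values, read off from a singular value decomposition
  M = U diag(sigma) V^T with U, V orthogonal and sigma nonnegative (the sum is independent of the SVD).\<close>
definition nuclear_norm :: "real^'n^'n \<Rightarrow> real" where
  "nuclear_norm M = (SOME t. \<exists>U V \<sigma>. orthogonal_matrix U \<and> orthogonal_matrix V \<and>
      (\<forall>i. \<sigma> i \<ge> 0) \<and> M = U ** diag_mat \<sigma> ** transpose V \<and> t = (\<Sum>i\<in>UNIV. \<sigma> i))"

definition norm21 :: "real^'n^'n \<Rightarrow> real" where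
  "norm21 M = (\<Sum>j\<in>UNIV. sqrt (\<Sum>i\<in>UNIV. (M$i$j)^2))"

definition frob_inner :: "real^'n^'n \<Rightarrow> real^'n^'n \<Rightarrow> real" where
  "frob_inner M N = (\<Sum>i\<in>UNIV. \<Sum>j\<in>UNIV. M$i$j * N$i$j)"

definition sym_bern :: "((real, 'n::{finite,linorder}) vec, 'n) vec \<Rightarrow> ((real, 'n) vec, 'n) vec pmf" where
  "sym_bern P = map_pmf
     (\<lambda>f. \<chi> i j. if i < j then of_bool (f (i,j)) else if j < i then of_bool (f (j,i)) else 0)
     (Pi_pmf {(i,j). i < j} False (\<lambda>(i,j). bernoulli_pmf (P$i$j)))"

definition objF :: "real \<Rightarrow> real \<Rightarrow> real^'n::finite^'n \<Rightarrow> real^'n^'n \<Rightarrow> real^'n^'n \<Rightarrow> real^'n^'n \<Rightarrow> real" where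
  "objF lam1 lam2 A \<Omega> S L =
     (1/2) * (\<Sum>i\<in>UNIV. \<Sum>j\<in>UNIV. (\<Omega>$i$j * (A$i$j - L$i$j - S$i$j - S$j$i))^2)
     + lam1 * nuclear_norm L + lam2 * norm21 S"

definition feasible_S :: "real^'n::finite^'n \<Rightarrow> bool" where
  "feasible_S S \<longleftrightarrow> (\<forall>i j. 0 \<le> S$i$j \<and> S$i$j \<le> 1)"

definition feasible_L :: "real \<Rightarrow> real^'n::finite^'n \<Rightarrow> bool" where
  "feasible_L \<rho> L \<longleftrightarrow> transpose L = L \<and> (\<forall>i j. 0 \<le> L$i$j \<and> L$i$j \<le> \<rho>)"

text \<open>(Shat, Lhat) minimises F over the box constraints, and (standing assumption)
  Shat also minimises S \<mapsto> F(S, Lhat) over all entrywise nonnegative S.\<close>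
definition is_estimator ::
  "real \<Rightarrow> real \<Rightarrow> real \<Rightarrow> real^'n::finite^'n \<Rightarrow> real^'n^'n \<Rightarrow> real^'n^'n \<Rightarrow> real^'n^'n \<Rightarrow> bool" where
  "is_estimator lam1 lam2 \<rho> A \<Omega> Sh Lh \<longleftrightarrow>
     feasible_S Sh \<and> feasible_L \<rho> Lh \<and>
     (\<forall>S L. feasible_S S \<longrightarrow> feasible_L \<rho> L \<longrightarrow>
        objF lam1 lam2 A \<Omega> Sh Lh \<le> objF lam1 lam2 A \<Omega> S L) \<and>
     (\<forall>S. (\<forall>i j. 0 \<le> S$i$j) \<longrightarrow> objF lam1 lam2 A \<Omega> Sh Lh \<le> objF lam1 lam2 A \<Omega> S Lh)"

end

theory Submission
  imports Defs
begin


lemma kkt: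
  fixes A \<Omega> Sh Lh :: "real^'n::finite^'n"
  assumes est: "is_estimator lam1 lam2 \<rho> A \<Omega> Sh Lh"
    and lam: "lam2 > 0"
    and symA: "\<forall>a b. A$a$b = A$b$a" and symO: "\<forall>a b. \<Omega>$a$b = \<Omega>$b$a"
    and ij: "i \<noteq> j" and om: "\<Omega>$i$j = 1" and pos: "Sh$i$j > 0"
  shows "0 \<le> A$i$j - Lh$i$j - Sh$i$j - Sh$j$i"
proof (rule ccontr)
  define R where "R = A$i$j - Lh$i$j - Sh$i$j - Sh$j$i"
  assume "\<not> 0 \<le> A$i$j - Lh$i$j - Sh$i$j - Sh$j$i"
  hence Rneg: "R < 0" unfolding R_def by simp
  from est have fS: "feasible_S Sh" and fL: "feasible_L \<rho> Lh"
    and opt: "\<forall>S. (\<forall>i j. 0 \<le> S$i$j) \<longrightarrow> objF lam1 lam2 A \<Omega> Sh Lh \<le> objF lam1 lam2 A \<Omega> S Lh"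
    unfolding is_estimator_def by auto
  have symL: "Lh$a$b = Lh$b$a" for a b
    using fL unfolding feasible_L_def by (metis transpose_def vec_lambda_beta)
  have Shnn: "0 \<le> Sh$a$b" for a b using fS unfolding feasible_S_def by auto
  define t where "t = min (Sh$i$j) (-R)"
  have tpos: "t > 0" using pos Rneg unfolding t_def by simp
  have tle: "t \<le> Sh$i$j" "t \<le> -R" unfolding t_def by auto
  define S' where "S' = (\<chi> a b. if a = i \<and> b = j then Sh$i$j - t else Sh$a$b)"
  have S'nn: "\<forall>a b. 0 \<le> S'$a$b" using tle Shnn unfolding S'_def by auto
  define res where "res S a b = \<Omega>$a$b * (A$a$b - Lh$a$b - S$a$b - S$b$a)" for S :: "real^'n^'n" and a b
  define d where "d = (R + t)^2 - R^2"
  have dneg: "d < 0"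
  proof -
    have "d = t * (2*R + t)" unfolding d_def by (simp add: power2_eq_square algebra_simps)
    moreover have "2*R + t < 0" using tle Rneg by linarith
    ultimately show ?thesis using tpos by (simp add: mult_pos_neg)
  qed
  have diff: "(res S' a b)^2 - (res Sh a b)^2 = (if a = i \<and> b = j then d else 0) + (if a = j \<and> b = i then d else 0)" for a b
  proof -
    have oji: "\<Omega>$j$i = 1" using om symO by metis
    consider "a = i \<and> b = j" | "a = j \<and> b = i" | "\<not>(a = i \<and> b = j) \<and> \<not>(a = j \<and> b = i)" by blast
    thus ?thesis
    proof cases
      case 1
      have "res S' a b = R + t" "res Sh a b = R"
        using 1 ij om unfolding res_def S'_def R_def by auto
      thus ?thesis using 1 ij unfolding d_def by auto
    next
      case 2
      have "res S' a b = R + t" "res Sh a b = R"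
        using 2 ij oji symA[rule_format, of j i] symL[of j i] unfolding res_def S'_def R_def by auto
      thus ?thesis using 2 ij unfolding d_def by auto
    next
      case 3
      have e1: "S'$a$b = Sh$a$b" using 3 unfolding S'_def by (simp only: vec_lambda_beta if_False simp_thms)
      have e2: "S'$b$a = Sh$b$a" using 3 unfolding S'_def by (auto simp only: vec_lambda_beta split: if_split)
      have "res S' a b = res Sh a b" unfolding res_def e1 e2 ..
      thus ?thesis unfolding if_not_P[OF conjunct1[OF 3]] if_not_P[OF conjunct2[OF 3]] by simp
    qed
  qed
  have sm: "(\<Sum>a\<in>UNIV. \<Sum>b\<in>UNIV. (res S' a b)^2) = (\<Sum>a\<in>UNIV. \<Sum>b\<in>UNIV. (res Sh a b)^2) + 2*d"
  proof -
    have "(\<Sum>a\<in>UNIV. \<Sum>b\<in>UNIV. (res S' a b)^2) - (\<Sum>a\<in>UNIV. \<Sum>b\<in>UNIV. (res Sh a b)^2)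
        = (\<Sum>a\<in>UNIV. \<Sum>b\<in>UNIV. (res S' a b)^2 - (res Sh a b)^2)"
      by (simp add: sum_subtractf)
    also have "\<dots> = (\<Sum>a\<in>UNIV. \<Sum>b\<in>UNIV. (if a = i \<and> b = j then d else 0) + (if a = j \<and> b = i then d else 0))"
      using diff by simp
    also have "\<dots> = 2*d"
    proof -
      have dl: "(\<Sum>a\<in>UNIV. \<Sum>b\<in>UNIV. (if a = p \<and> b = q then d else 0)) = d" for p q :: 'n
      proof -
        have "(\<Sum>b\<in>UNIV. (if a = p \<and> b = q then d else 0)) = (if a = p then d else 0)" for a
          by (cases "a = p") auto
        thus ?thesis by simp
      qed
      show ?thesis by (simp only: sum.distrib dl)
    qed
    finally show ?thesis by simp
  qed
  have nm: "norm21 S' \<le> norm21 Sh"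
    unfolding norm21_def
  proof (intro sum_mono real_sqrt_le_mono)
    fix b a :: 'n
    show "(S'$a$b)^2 \<le> (Sh$a$b)^2"
      using tle tpos Shnn unfolding S'_def by (auto intro!: power_mono)
  qed
  have oF: "objF lam1 lam2 A \<Omega> S Lh = (1/2) * (\<Sum>a\<in>UNIV. \<Sum>b\<in>UNIV. (res S a b)^2) + lam1 * nuclear_norm Lh + lam2 * norm21 S" for S
    unfolding objF_def res_def by simp
  have "objF lam1 lam2 A \<Omega> S' Lh = objF lam1 lam2 A \<Omega> Sh Lh + d + lam2 * (norm21 S' - norm21 Sh)"
    unfolding oF sm by (simp add: algebra_simps)
  also have "\<dots> < objF lam1 lam2 A \<Omega> Sh Lh"
  proof -
    have "lam2 * (norm21 S' - norm21 Sh) \<le> 0" using nm lam by (simp add: mult_nonneg_nonpos)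
    thus ?thesis using dneg by linarith
  qed
  finally show False using opt S'nn by fastforce
qed


lemma entry_bound:
  fixes A \<Omega> Sh Lh :: "real^'n::finite^'n"
  assumes est: "is_estimator lam1 lam2 \<rho> A \<Omega> Sh Lh"
    and lam: "lam2 > 0"
    and symA: "\<forall>a b. A$a$b = A$b$a" and symO: "\<forall>a b. \<Omega>$a$b = \<Omega>$b$a"
    and Ann: "\<forall>a b. 0 \<le> A$a$b" and O01: "\<forall>a b. \<Omega>$a$b = 0 \<or> \<Omega>$a$b = 1"
    and Odiag: "\<forall>a. \<Omega>$a$a = 0"
  shows "\<bar>\<Omega>$i$j * (A$i$j - Sh$i$j - Sh$j$i)\<bar> \<le> \<Omega>$i$j * A$i$j"
proof -
  from est have fS: "feasible_S Sh" and fL: "feasible_L \<rho> Lh"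
    unfolding is_estimator_def by auto
  have symL: "Lh$a$b = Lh$b$a" for a b
    using fL unfolding feasible_L_def by (metis transpose_def vec_lambda_beta)
  have Lnn: "0 \<le> Lh$a$b" for a b using fL unfolding feasible_L_def by auto
  have Shnn: "0 \<le> Sh$a$b" for a b using fS unfolding feasible_S_def by auto
  show ?thesis
  proof (cases "\<Omega>$i$j = 1 \<and> i \<noteq> j")
    case False
    hence "\<Omega>$i$j = 0" using O01 Odiag by metis
    thus ?thesis by simp
  next
    case True
    hence om: "\<Omega>$i$j = 1" and ij: "i \<noteq> j" by auto
    have oji: "\<Omega>$j$i = 1" using om symO by metis
    have "0 \<le> A$i$j - Sh$i$j - Sh$j$i \<and> A$i$j - Sh$i$j - Sh$j$i \<le> A$i$j"
    proof (cases "Sh$i$j > 0 \<or> Sh$j$i > 0")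
      case True
      hence "0 \<le> A$i$j - Lh$i$j - Sh$i$j - Sh$j$i"
      proof
        assume "Sh$i$j > 0" thus ?thesis using kkt[OF est lam symA symO ij om] by blast
      next
        assume "Sh$j$i > 0"
        hence "0 \<le> A$j$i - Lh$j$i - Sh$j$i - Sh$i$j" using kkt[OF est lam symA symO ij[symmetric] oji] by blast
        thus ?thesis using symA[rule_format, of i j] symL[of i j] by linarith
      qed
      thus ?thesis using Lnn[of i j] Shnn[of i j] Shnn[of j i] by linarith
    next
      case False
      hence "Sh$i$j = 0" "Sh$j$i = 0" using Shnn[of i j] Shnn[of j i] by linarith+
      thus ?thesis using Ann by simp
    qed
    thus ?thesis using om by simp
  qed
qed

lemma frob_bound:
  fixes A \<Omega> Sh Lh Lstar :: "real^'n::finite^'n"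
  assumes est: "is_estimator lam1 lam2 \<rho> A \<Omega> Sh Lh"
    and lam: "lam2 > 0"
    and symA: "\<forall>a b. A$a$b = A$b$a" and symO: "\<forall>a b. \<Omega>$a$b = \<Omega>$b$a"
    and Ann: "\<forall>a b. 0 \<le> A$a$b" and O01: "\<forall>a b. \<Omega>$a$b = 0 \<or> \<Omega>$a$b = 1"
    and Odiag: "\<forall>a. \<Omega>$a$a = 0"
    and Lout: "\<forall>a b. \<not>(a \<in> I \<and> b \<in> I) \<longrightarrow> Lstar$a$b = 0"
  shows "\<bar>frob_inner (\<chi> i j. if i \<in> I \<and> j \<in> I then 0 else \<Omega>$i$j * (A$i$j - Sh$i$j - Sh$j$i)) (Lstar - Lh)\<bar>
     \<le> \<rho> * (\<Sum>a\<in>UNIV. \<Sum>b\<in>UNIV. if a \<in> I \<and> b \<in> I then 0 else \<Omega>$a$b * A$a$b)"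
proof -
  from est have fL: "feasible_L \<rho> Lh" unfolding is_estimator_def by auto
  have Lr: "0 \<le> Lh$a$b \<and> Lh$a$b \<le> \<rho>" for a b using fL unfolding feasible_L_def by auto
  define X where "X = (\<chi> i j. if i \<in> I \<and> j \<in> I then 0 else \<Omega>$i$j * (A$i$j - Sh$i$j - Sh$j$i))"
  have tm: "\<bar>X$a$b * (Lstar - Lh)$a$b\<bar> \<le> \<rho> * (if a \<in> I \<and> b \<in> I then 0 else \<Omega>$a$b * A$a$b)" for a b
  proof (cases "a \<in> I \<and> b \<in> I")
    case True thus ?thesis unfolding X_def by simp
  next
    case False
    have e: "\<bar>X$a$b\<bar> \<le> \<Omega>$a$b * A$a$b" unfolding X_def using False
      entry_bound[OF est lam symA symO Ann O01 Odiag, of a b] by auto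
    have l: "\<bar>(Lstar - Lh)$a$b\<bar> \<le> \<rho>" using Lout False Lr[of a b] by simp
    have "\<bar>X$a$b * (Lstar - Lh)$a$b\<bar> = \<bar>X$a$b\<bar> * \<bar>(Lstar - Lh)$a$b\<bar>" by (rule abs_mult)
    also have "\<dots> \<le> (\<Omega>$a$b * A$a$b) * \<rho>"
      by (rule mult_mono[OF e l]) (auto intro: order.trans[OF abs_ge_zero e])
    finally show ?thesis unfolding if_not_P[OF False] by (simp add: mult.commute)
  qed
  have "\<bar>frob_inner X (Lstar - Lh)\<bar> \<le> (\<Sum>a\<in>UNIV. \<Sum>b\<in>UNIV. \<bar>X$a$b * (Lstar - Lh)$a$b\<bar>)"
    unfolding frob_inner_def by (rule order.trans[OF sum_abs sum_mono[OF sum_abs]])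
  also have "\<dots> \<le> (\<Sum>a\<in>UNIV. \<Sum>b\<in>UNIV. \<rho> * (if a \<in> I \<and> b \<in> I then 0 else \<Omega>$a$b * A$a$b))"
    by (intro sum_mono tm)
  also have "\<dots> = \<rho> * (\<Sum>a\<in>UNIV. \<Sum>b\<in>UNIV. if a \<in> I \<and> b \<in> I then 0 else \<Omega>$a$b * A$a$b)"
    by (simp add: sum_distrib_left)
  finally show ?thesis unfolding X_def .
qed



lemma nn_pair_prod:
  assumes "finite S"
  shows "(\<integral>\<^sup>+x. (\<Prod>p\<in>S. w p (fst x p) (snd x p)) \<partial>pair_pmf (Pi_pmf S d1 P1) (Pi_pmf S d2 P2))
      = (\<Prod>p\<in>S. \<integral>\<^sup>+b. (\<integral>\<^sup>+c. w p b c \<partial>P2 p) \<partial>P1 p)"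
proof -
  have "(\<integral>\<^sup>+x. (\<Prod>p\<in>S. w p (fst x p) (snd x p)) \<partial>pair_pmf (Pi_pmf S d1 P1) (Pi_pmf S d2 P2))
     = (\<integral>\<^sup>+f. (\<integral>\<^sup>+g. (\<Prod>p\<in>S. w p (f p) (g p)) \<partial>Pi_pmf S d2 P2) \<partial>Pi_pmf S d1 P1)"
    by (simp add: nn_integral_pair_pmf')
  also have "\<dots> = (\<integral>\<^sup>+f. (\<Prod>p\<in>S. \<integral>\<^sup>+c. w p (f p) c \<partial>P2 p) \<partial>Pi_pmf S d1 P1)"
    by (intro nn_integral_cong nn_integral_prod_Pi_pmf[OF assms])
  also have "\<dots> = (\<Prod>p\<in>S. \<integral>\<^sup>+b. (\<integral>\<^sup>+c. w p b c \<partial>P2 p) \<partial>P1 p)"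
    by (rule nn_integral_prod_Pi_pmf[OF assms])
  finally show ?thesis .
qed

lemma chern:
  fixes pM pP :: "'a \<Rightarrow> real"
  assumes fin: "finite S" and QS: "Q \<subseteq> S"
    and rM: "\<forall>p. 0 \<le> pM p \<and> pM p \<le> 1" and rP: "\<forall>p. 0 \<le> pP p \<and> pP p \<le> 1"
    and sumb: "(\<Sum>p\<in>Q. pM p * pP p) \<le> 4*a"
  shows "measure_pmf.prob (pair_pmf (Pi_pmf S False (\<lambda>p. bernoulli_pmf (pM p))) (Pi_pmf S False (\<lambda>p. bernoulli_pmf (pP p))))
           {x. 8*a \<le> (\<Sum>p\<in>Q. of_bool (fst x p \<and> snd x p))} \<le> exp(-a)"
proof -
  let ?M = "pair_pmf (Pi_pmf S False (\<lambda>p. bernoulli_pmf (pM p))) (Pi_pmf S False (\<lambda>p. bernoulli_pmf (pP p)))"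
  define h where "h x = (\<Sum>p\<in>Q. of_bool (fst x p \<and> snd x p) :: real)" for x :: "('a \<Rightarrow> bool) \<times> ('a \<Rightarrow> bool)"
  define w where "w p b c = (if p \<in> Q \<and> b \<and> c then exp 1 else 1 :: real)" for p b c
  have wnn: "0 \<le> w p b c" for p b c unfolding w_def by simp
  have hexp: "exp (h x) = (\<Prod>p\<in>S. w p (fst x p) (snd x p))" for x
  proof -
    have "h x = (\<Sum>p\<in>S. if p \<in> Q then of_bool (fst x p \<and> snd x p) else 0)"
      unfolding h_def using QS fin by (simp add: sum.If_cases Int_absorb1)
    hence "exp (h x) = (\<Prod>p\<in>S. exp (if p \<in> Q then of_bool (fst x p \<and> snd x p) else 0))"
      by (simp add: exp_sum fin)
    also have "\<dots> = (\<Prod>p\<in>S. w p (fst x p) (snd x p))"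
      by (intro prod.cong) (auto simp: w_def)
    finally show ?thesis .
  qed
  define u where "u p = (if p \<in> Q then 1 + pM p * pP p * (exp 1 - 1) else 1)" for p
  have inner: "(\<integral>\<^sup>+b. (\<integral>\<^sup>+c. ennreal (w p b c) \<partial>bernoulli_pmf (pP p)) \<partial>bernoulli_pmf (pM p)) = ennreal (u p)" for p
  proof -
    have r: "0 \<le> pM p" "pM p \<le> 1" "0 \<le> pP p" "pP p \<le> 1" using rM rP by auto
    define v where "v b = w p b True * pP p + w p b False * (1 - pP p)" for b
    have vnn: "0 \<le> v b" for b unfolding v_def using wnn r by simp
    have "(\<integral>\<^sup>+b. (\<integral>\<^sup>+c. ennreal (w p b c) \<partial>bernoulli_pmf (pP p)) \<partial>bernoulli_pmf (pM p))
        = (\<integral>\<^sup>+b. ennreal (v b) \<partial>bernoulli_pmf (pM p))"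
      unfolding v_def using r wnn by (simp add: ennreal_mult)
    also have "\<dots> = ennreal (v True * pM p + v False * (1 - pM p))"
      using r vnn by (simp add: ennreal_mult)
    also have "v True * pM p + v False * (1 - pM p) = u p"
      unfolding v_def w_def u_def by (simp add: algebra_simps)
    finally show ?thesis .
  qed
  have unn: "0 \<le> u p" for p unfolding u_def using rM rP by (simp add: mult_nonneg_nonneg)
  have int: "(\<integral>\<^sup>+x. ennreal (exp (1 * h x)) * indicator (space ?M) x \<partial>?M) = ennreal (\<Prod>p\<in>S. u p)"
  proof -
    have "(\<integral>\<^sup>+x. ennreal (exp (1 * h x)) * indicator (space ?M) x \<partial>?M)
        = (\<integral>\<^sup>+x. (\<Prod>p\<in>S. ennreal (w p (fst x p) (snd x p))) \<partial>?M)"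
      by (intro nn_integral_cong) (simp add: hexp prod_ennreal wnn)
    also have "\<dots> = (\<Prod>p\<in>S. \<integral>\<^sup>+b. (\<integral>\<^sup>+c. ennreal (w p b c) \<partial>bernoulli_pmf (pP p)) \<partial>bernoulli_pmf (pM p))"
      by (rule nn_pair_prod[OF fin])
    also have "\<dots> = (\<Prod>p\<in>S. ennreal (u p))"
      by (simp only: inner)
    also have "\<dots> = ennreal (\<Prod>p\<in>S. u p)" by (simp add: prod_ennreal unn)
    finally show ?thesis .
  qed
  have ub: "(\<Prod>p\<in>S. u p) \<le> exp (7*a)"
  proof -
    have "(\<Prod>p\<in>S. u p) \<le> (\<Prod>p\<in>S. exp (if p \<in> Q then pM p * pP p * (exp 1 - 1) else 0))"
      by (intro prod_mono conjI unn) (simp add: u_def exp_ge_add_one_self)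
    also have "\<dots> = exp (\<Sum>p\<in>S. if p \<in> Q then pM p * pP p * (exp 1 - 1) else 0)"
      by (simp add: exp_sum fin)
    also have "(\<Sum>p\<in>S. if p \<in> Q then pM p * pP p * (exp 1 - 1) else 0) = (exp 1 - 1) * (\<Sum>p\<in>Q. pM p * pP p)"
      using QS fin by (simp add: sum.If_cases Int_absorb1 sum_distrib_left mult.commute)
    also have "\<dots> \<le> 7 * a"
    proof -
      have s0: "0 \<le> (\<Sum>p\<in>Q. pM p * pP p)" using rM rP by (intro sum_nonneg) simp
      have "exp 1 - 1 \<le> (7/4::real)" using e_less_272 by simp
      hence "(exp 1 - 1) * (\<Sum>p\<in>Q. pM p * pP p) \<le> (7/4) * (\<Sum>p\<in>Q. pM p * pP p)"
        using s0 by (rule mult_right_mono)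
      thus ?thesis using sumb by linarith
    qed
    finally show ?thesis by simp
  qed
  have "emeasure ?M {x \<in> space ?M. 8*a \<le> h x} \<le>
        ennreal (exp (-1 * (8*a))) * (\<integral>\<^sup>+x. ennreal (exp (1 * h x)) * indicator (space ?M) x \<partial>?M)"
    by (rule Chernoff_ineq_nn_integral_ge) auto
  also have "\<dots> = ennreal (exp (-8*a) * (\<Prod>p\<in>S. u p))"
    unfolding int by (simp add: ennreal_mult' prod_nonneg unn)
  also have "\<dots> \<le> ennreal (exp (-a))"
  proof (rule ennreal_leI)
    have "exp (-8*a) * (\<Prod>p\<in>S. u p) \<le> exp (-8*a) * exp (7*a)" using ub by simp
    also have "\<dots> = exp (-a)" by (simp flip: exp_add)
    finally show "exp (-8*a) * (\<Prod>p\<in>S. u p) \<le> exp (-a)" .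
  qed
  finally have "emeasure ?M {x. 8*a \<le> h x} \<le> ennreal (exp (-a))" by simp
  thus ?thesis unfolding h_def by (simp add: measure_pmf.emeasure_eq_measure)
qed



lemma sum_pairs_UNIV:
  fixes F :: "'n::finite \<times> 'n \<Rightarrow> real"
  shows "(\<Sum>p\<in>UNIV. F p) = (\<Sum>i\<in>UNIV. \<Sum>j\<in>UNIV. F (i,j))"
  by (simp add: sum.cartesian_product UNIV_Times_UNIV[symmetric] del: UNIV_Times_UNIV)

lemma sumQ_bound:
  fixes Pi :: "((real, 'n::{finite,linorder}) vec, 'n) vec" and I :: "'n set"
  assumes Pi_sym: "\<forall>i j. Pi$i$j = Pi$j$i" and Pi_nn: "\<forall>i j. 0 \<le> Pi$i$j"
    and rowO: "\<forall>i. (\<Sum>j\<in>UNIV - I. Pi$i$j) \<le> c"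
  shows "(\<Sum>p\<in>{(i,j). i<j \<and> \<not>(i\<in>I \<and> j\<in>I)}. Pi$fst p$snd p) \<le> 2 * real CARD('n) * c"
proof -
  let ?O = "UNIV - I"
  have hr: "(\<Sum>i\<in>UNIV. if i \<notin> I then x i else 0) = (\<Sum>i\<in>UNIV - I. x i)" for x :: "'n \<Rightarrow> real"
    by (rule sum.mono_neutral_cong_right) auto
  define G where "G p = (if snd p \<in> ?O then Pi$fst p$snd p else 0) + (if fst p \<in> ?O then Pi$fst p$snd p else 0)" for p :: "'n \<times> 'n"
  have Gnn: "0 \<le> G p" for p unfolding G_def using Pi_nn by simp
  have "(\<Sum>p\<in>{(i,j). i<j \<and> \<not>(i\<in>I \<and> j\<in>I)}. Pi$fst p$snd p) \<le> (\<Sum>p\<in>{(i,j). i<j \<and> \<not>(i\<in>I \<and> j\<in>I)}. G p)"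
  proof (rule sum_mono)
    fix p assume "p \<in> {(i,j). i<j \<and> \<not>(i\<in>I \<and> j\<in>I)}"
    hence "snd p \<in> ?O \<or> fst p \<in> ?O" by auto
    thus "Pi$fst p$snd p \<le> G p" unfolding G_def using Pi_nn by auto
  qed
  also have "\<dots> \<le> (\<Sum>p\<in>UNIV. G p)" by (rule sum_mono2) (auto simp: Gnn)
  also have "\<dots> = (\<Sum>i\<in>UNIV. \<Sum>j\<in>UNIV. G (i,j))" by (rule sum_pairs_UNIV)
  also have "\<dots> = (\<Sum>i\<in>UNIV. \<Sum>j\<in>?O. Pi$i$j) + (\<Sum>i\<in>UNIV. \<Sum>j\<in>?O. Pi$i$j)"
  proof -
    have e1: "(\<Sum>i\<in>UNIV. \<Sum>j\<in>UNIV. G (i,j)) = (\<Sum>i\<in>UNIV. \<Sum>j\<in>UNIV. (if j \<in> ?O then Pi$i$j else 0)) + (\<Sum>i\<in>UNIV. \<Sum>j\<in>UNIV. (if i \<in> ?O then Pi$i$j else 0))"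
      unfolding G_def by (simp only: sum.distrib fst_conv snd_conv)
    have e2: "(\<Sum>i\<in>UNIV. \<Sum>j\<in>UNIV. (if i \<in> ?O then Pi$i$j else 0)) = (\<Sum>j\<in>UNIV. \<Sum>i\<in>UNIV. (if i \<in> ?O then Pi$j$i else 0))"
      by (subst sum.swap) (intro sum.cong refl, metis Pi_sym)
    have e3: "(\<Sum>j\<in>UNIV. \<Sum>i\<in>UNIV. (if i \<in> ?O then Pi$j$i else 0)) = (\<Sum>i\<in>UNIV. \<Sum>j\<in>?O. Pi$i$j)"
      by (simp add: hr)
    have e4: "(\<Sum>i\<in>UNIV. \<Sum>j\<in>UNIV. (if j \<in> ?O then Pi$i$j else 0)) = (\<Sum>i\<in>UNIV. \<Sum>j\<in>?O. Pi$i$j)"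
      by (simp add: hr)
    show ?thesis unfolding e1 e2 e3 e4 ..
  qed
  also have "\<dots> \<le> (\<Sum>i\<in>(UNIV::'n set). c) + (\<Sum>i\<in>(UNIV::'n set). c)"
    using rowO by (intro add_mono sum_mono) auto
  also have "\<dots> = 2 * real CARD('n) * c" by simp
  finally show ?thesis .
qed

definition phiM :: "('n::{finite,linorder} \<times> 'n \<Rightarrow> bool) \<Rightarrow> ((real, 'n) vec, 'n) vec" where
  "phiM f = (\<chi> i j. if i < j then of_bool (f (i,j)) else if j < i then of_bool (f (j,i)) else 0)"

lemma double_count:
  fixes f g :: "'n::{finite,linorder} \<times> 'n \<Rightarrow> bool" and I :: "'n set"
  shows "(\<Sum>a\<in>UNIV. \<Sum>b\<in>UNIV. if a \<in> I \<and> b \<in> I then 0 else (phiM g)$a$b * (phiM f)$a$b)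
       = 2 * (\<Sum>p\<in>{(i,j). i<j \<and> \<not>(i\<in>I \<and> j\<in>I)}. of_bool (f p \<and> g p))"
proof -
  define Q where "Q = {(i,j). i<j \<and> \<not>(i\<in>I \<and> j\<in>I)}"
  define c where "c p = (if p \<in> Q then of_bool (f p \<and> g p) else 0 :: real)" for p
  have T: "(if a \<in> I \<and> b \<in> I then 0 else (phiM g)$a$b * (phiM f)$a$b) = c (a,b) + c (b,a)" for a b
    unfolding phiM_def c_def Q_def by (cases a b rule: linorder_cases) auto
  have "(\<Sum>a\<in>UNIV. \<Sum>b\<in>UNIV. c (b,a)) = (\<Sum>a\<in>UNIV. \<Sum>b\<in>UNIV. c (a,b))"
    by (rule sum.swap[symmetric])
  moreover have "(\<Sum>a\<in>UNIV. \<Sum>b\<in>UNIV. c (a,b)) = (\<Sum>p\<in>Q. of_bool (f p \<and> g p))"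
  proof -
    have "(\<Sum>a\<in>UNIV. \<Sum>b\<in>UNIV. c (a,b)) = (\<Sum>p\<in>UNIV. c p)" by (rule sum_pairs_UNIV[symmetric])
    also have "\<dots> = (\<Sum>p\<in>Q. of_bool (f p \<and> g p))"
      unfolding c_def by (simp add: sum.inter_restrict[symmetric])
    finally show ?thesis .
  qed
  ultimately show ?thesis unfolding T Q_def[symmetric] by (simp add: sum.distrib)
qed


lemma phiM_props:
  fixes f :: "'n::{finite,linorder} \<times> 'n \<Rightarrow> bool"
  shows "\<forall>a b. phiM f $a$b = phiM f $b$a" "\<forall>a b. 0 \<le> phiM f $a$b"
    "\<forall>a b. phiM f $a$b = 0 \<or> phiM f $a$b = 1" "\<forall>a. phiM f $a$a = 0"
proof (intro allI)
  fix a b :: 'n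
  show "phiM f $a$b = phiM f $b$a" unfolding phiM_def by (cases a b rule: linorder_cases) auto
next
  show "\<forall>a b. 0 \<le> phiM f $a$b" unfolding phiM_def by auto
next
  show "\<forall>a b. phiM f $a$b = 0 \<or> phiM f $a$b = 1" unfolding phiM_def by auto
next
  show "\<forall>a. phiM f $a$a = 0" unfolding phiM_def by auto
qed

theorem mainTheorem11:
  fixes Iset :: "'n::{finite,linorder} set"
    and Lstar Sstar Pi :: "((real, 'n) vec, 'n) vec"
    and \<rho> \<gamma> \<mu> \<nu> \<nu>t lam1 lam2 :: real
    and k :: nat
  defines "Oset \<equiv> UNIV - Iset"
  defines "s \<equiv> card (UNIV - Iset)"
  defines "n \<equiv> CARD('n)"
  assumes n_ge: "n \<ge> 2"
    and rho: "0 < \<rho>" "\<rho> \<le> 1/2"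
    and gamma: "0 < \<gamma>" "\<gamma> \<le> 1"
    and k: "k \<ge> 1"
    and Lstar_sym: "transpose Lstar = Lstar"
    and Lstar_rank: "rank Lstar = k"
    and Lstar_range: "\<forall>i j. 0 \<le> Lstar$i$j \<and> Lstar$i$j \<le> \<rho>"
    and Lstar_out: "\<forall>i j. i \<in> Oset \<or> j \<in> Oset \<longrightarrow> Lstar$i$j = 0"
    and Sstar_range: "\<forall>i j. 0 \<le> Sstar$i$j \<and> Sstar$i$j \<le> \<gamma>"
    and Sstar_diag: "\<forall>i. Sstar$i$i = 0"
    and Sstar_cols: "\<forall>i j. j \<in> Iset \<longrightarrow> Sstar$i$j = 0"
    and M_range: "\<forall>i j. 0 \<le> Lstar$i$j + Sstar$i$j + Sstar$j$i \<and> Lstar$i$j + Sstar$i$j + Sstar$j$i \<le> 1"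
    and Pi_sym: "transpose Pi = Pi"
    and Pi_diag: "\<forall>i. Pi$i$i = 0"
    and Pi_range: "\<forall>i j. 0 \<le> Pi$i$j \<and> Pi$i$j \<le> 1"
    and A1_mu: "\<mu> > 0" "\<forall>i\<in>Iset. \<forall>j\<in>Iset. i \<noteq> j \<longrightarrow> Pi$i$j \<ge> \<mu>"
    and A1_nu: "0 < \<nu>" "\<nu> \<le> 1" "0 < \<nu>t" "\<nu>t \<le> 1"
    and A1_rowI: "\<forall>i\<in>Iset. (\<Sum>j\<in>Iset. Pi$i$j) \<le> \<nu> * real n"
    and A1_rowO: "\<forall>i. (\<Sum>j\<in>Oset. Pi$i$j) \<le> \<nu>t * real s"
    and A2: "\<nu> * \<rho> \<ge> ln (real n) / real n" "\<nu>t * \<gamma> \<ge> ln (real n) / real n"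
    and A3: "\<nu> * \<rho> * real n \<ge> \<nu>t * \<gamma> * real s"
    and lam: "lam1 > 0" "lam2 > 0"
  shows "measure_pmf.prob
           (pair_pmf (sym_bern (\<chi> i j. Lstar$i$j + Sstar$i$j + Sstar$j$i)) (sym_bern Pi))
           {(A, \<Omega>). \<forall>Sh Lh. is_estimator lam1 lam2 \<rho> A \<Omega> Sh Lh \<longrightarrow>
               \<bar>frob_inner
                  (\<chi> i j. if i \<in> Iset \<and> j \<in> Iset then 0
                          else \<Omega>$i$j * (A$i$j - Sh$i$j - Sh$j$i))
                  (Lstar - Lh)\<bar>
               \<le> 16 * \<nu>t * \<gamma> * \<rho> * real n * real s}
         \<ge> 1 - 2 * exp (- (\<nu>t * \<gamma> * real s * real n))"
proof -
  define S where "S = ({(i,j). i<j} :: ('n\<times>'n) set)"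
  define Q where "Q = ({(i,j). i<j \<and> \<not>(i\<in>Iset \<and> j\<in>Iset)} :: ('n\<times>'n) set)"
  define pM where "pM p = Lstar$fst p$snd p + Sstar$fst p$snd p + Sstar$snd p$fst p" for p :: "'n\<times>'n"
  define pP where "pP p = Pi$fst p$snd p" for p :: "'n\<times>'n"
  define a where "a = \<nu>t * \<gamma> * real s * real n"
  define F1 where "F1 = Pi_pmf S False (\<lambda>p. bernoulli_pmf (pM p))"
  define F2 where "F2 = Pi_pmf S False (\<lambda>p. bernoulli_pmf (pP p))"
  define h where "h x = (\<Sum>p\<in>Q. of_bool (fst x p \<and> snd x p) :: real)" for x :: "('n\<times>'n \<Rightarrow> bool) \<times> ('n\<times>'n \<Rightarrow> bool)"
  have sb1: "sym_bern (\<chi> i j. Lstar$i$j + Sstar$i$j + Sstar$j$i) = map_pmf phiM F1"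
    unfolding sym_bern_def phiM_def[abs_def] F1_def S_def pM_def by (simp add: case_prod_unfold)
  have sb2: "sym_bern Pi = map_pmf phiM F2"
    unfolding sym_bern_def phiM_def[abs_def] F2_def S_def pP_def by (simp add: case_prod_unfold)
  have finS: "finite S" by simp
  have QS: "Q \<subseteq> S" unfolding Q_def S_def by auto
  have rM: "\<forall>p. 0 \<le> pM p \<and> pM p \<le> 1" unfolding pM_def using M_range by auto
  have rP: "\<forall>p. 0 \<le> pP p \<and> pP p \<le> 1" unfolding pP_def using Pi_range by auto
  have Pi_sym': "\<forall>i j. Pi$i$j = Pi$j$i" using Pi_sym by (metis transpose_def vec_lambda_beta)
  have Pi_nn: "\<forall>i j. 0 \<le> Pi$i$j" using Pi_range by auto
  have rowO': "\<forall>i. (\<Sum>j\<in>UNIV - Iset. Pi$i$j) \<le> \<nu>t * real s" using A1_rowO unfolding Oset_def .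
  have sumP: "(\<Sum>p\<in>Q. pP p) \<le> 2 * real n * (\<nu>t * real s)"
    using sumQ_bound[OF Pi_sym' Pi_nn rowO'] unfolding Q_def pP_def n_def by simp
  have sumb: "(\<Sum>p\<in>Q. pM p * pP p) \<le> 4*a"
  proof -
    have "(\<Sum>p\<in>Q. pM p * pP p) \<le> (\<Sum>p\<in>Q. (2*\<gamma>) * pP p)"
    proof (rule sum_mono)
      fix p assume "p \<in> Q"
      hence "fst p \<in> Oset \<or> snd p \<in> Oset" unfolding Q_def Oset_def by auto
      hence "Lstar$fst p$snd p = 0" using Lstar_out by auto
      hence "pM p \<le> 2*\<gamma>" unfolding pM_def using Sstar_range by (smt (verit))
      thus "pM p * pP p \<le> (2*\<gamma>) * pP p" using rP[rule_format, of p] by (intro mult_right_mono) auto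
    qed
    also have "\<dots> = 2*\<gamma> * (\<Sum>p\<in>Q. pP p)" by (simp add: sum_distrib_left)
    also have "\<dots> \<le> 2*\<gamma> * (2 * real n * (\<nu>t * real s))"
      using sumP gamma by (intro mult_left_mono) auto
    also have "\<dots> = 4*a" unfolding a_def by simp
    finally show ?thesis .
  qed
  have ch: "measure_pmf.prob (pair_pmf F1 F2) {x. 8*a \<le> h x} \<le> exp (-a)"
    unfolding F1_def F2_def h_def by (rule chern[OF finS QS rM rP sumb])
  have key: "(phiM (fst x), phiM (snd x)) \<in> {(A, \<Omega>). \<forall>Sh Lh. is_estimator lam1 lam2 \<rho> A \<Omega> Sh Lh \<longrightarrow>
               \<bar>frob_inner
                  (\<chi> i j. if i \<in> Iset \<and> j \<in> Iset then 0
                          else \<Omega>$i$j * (A$i$j - Sh$i$j - Sh$j$i))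
                  (Lstar - Lh)\<bar>
               \<le> 16 * \<nu>t * \<gamma> * \<rho> * real n * real s}" if hx: "h x < 8*a" for x
  proof -
    obtain f g where x: "x = (f, g)" by (cases x)
    have Lout: "\<forall>a b. \<not>(a \<in> Iset \<and> b \<in> Iset) \<longrightarrow> Lstar$a$b = 0"
      using Lstar_out unfolding Oset_def by auto
    have dc: "(\<Sum>a\<in>UNIV. \<Sum>b\<in>UNIV. if a \<in> Iset \<and> b \<in> Iset then 0 else (phiM g)$a$b * (phiM f)$a$b) = 2 * h x"
      unfolding h_def x Q_def by (simp add: double_count)
    show ?thesis
    proof (simp add: x, intro allI impI)
      fix Sh Lh assume est: "is_estimator lam1 lam2 \<rho> (phiM f) (phiM g) Sh Lh"
      have "\<bar>frob_inner (\<chi> i j. if i \<in> Iset \<and> j \<in> Iset then 0 else phiM g$i$j * (phiM f$i$j - Sh$i$j - Sh$j$i)) (Lstar - Lh)\<bar>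
          \<le> \<rho> * (2 * h x)"
        using frob_bound[OF est lam(2) phiM_props(1)[of f] phiM_props(1)[of g] phiM_props(2)[of f]
            phiM_props(3)[of g] phiM_props(4)[of g] Lout] dc by simp
      also have "\<dots> \<le> \<rho> * (2 * (8*a))" using hx rho by (intro mult_left_mono) auto
      also have "\<dots> = 16 * \<nu>t * \<gamma> * \<rho> * real n * real s" unfolding a_def by simp
      finally show "\<bar>frob_inner (\<chi> i j. if i \<in> Iset \<and> j \<in> Iset then 0 else phiM g$i$j * (phiM f$i$j - Sh$i$j - Sh$j$i)) (Lstar - Lh)\<bar>
          \<le> 16 * \<nu>t * \<gamma> * \<rho> * real n * real s" .
    qed
  qed
  have "1 - 2 * exp (- (\<nu>t * \<gamma> * real s * real n)) \<le> 1 - exp (-a)"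
    unfolding a_def by simp
  also have "1 - exp (-a) \<le> 1 - measure_pmf.prob (pair_pmf F1 F2) {x. 8*a \<le> h x}"
    using ch by simp
  also have "\<dots> = measure_pmf.prob (pair_pmf F1 F2) (UNIV - {x. 8*a \<le> h x})"
    using measure_pmf.prob_compl[of "{x. 8*a \<le> h x}" "pair_pmf F1 F2"] by simp
  also have "\<dots> \<le> measure_pmf.prob (pair_pmf F1 F2) ((\<lambda>(f,g). (phiM f, phiM g)) -` {(A, \<Omega>). \<forall>Sh Lh. is_estimator lam1 lam2 \<rho> A \<Omega> Sh Lh \<longrightarrow>
               \<bar>frob_inner
                  (\<chi> i j. if i \<in> Iset \<and> j \<in> Iset then 0
                          else \<Omega>$i$j * (A$i$j - Sh$i$j - Sh$j$i))
                  (Lstar - Lh)\<bar>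
               \<le> 16 * \<nu>t * \<gamma> * \<rho> * real n * real s})"
  proof (rule measure_pmf.finite_measure_mono)
    show "UNIV - {x. 8*a \<le> h x} \<subseteq> (\<lambda>(f,g). (phiM f, phiM g)) -` {(A, \<Omega>). \<forall>Sh Lh. is_estimator lam1 lam2 \<rho> A \<Omega> Sh Lh \<longrightarrow>
               \<bar>frob_inner
                  (\<chi> i j. if i \<in> Iset \<and> j \<in> Iset then 0
                          else \<Omega>$i$j * (A$i$j - Sh$i$j - Sh$j$i))
                  (Lstar - Lh)\<bar>
               \<le> 16 * \<nu>t * \<gamma> * \<rho> * real n * real s}"
    proof
      fix x assume "x \<in> UNIV - {x. 8*a \<le> h x}"
      hence "h x < 8*a" by simp
      from key[OF this] show "x \<in> (\<lambda>(f,g). (phiM f, phiM g)) -` {(A, \<Omega>). \<forall>Sh Lh. is_estimator lam1 lam2 \<rho> A \<Omega> Sh Lh \<longrightarrow>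
               \<bar>frob_inner
                  (\<chi> i j. if i \<in> Iset \<and> j \<in> Iset then 0
                          else \<Omega>$i$j * (A$i$j - Sh$i$j - Sh$j$i))
                  (Lstar - Lh)\<bar>
               \<le> 16 * \<nu>t * \<gamma> * \<rho> * real n * real s}"
        by (simp add: case_prod_unfold)
    qed
  qed simp
  also have "\<dots> = measure_pmf.prob (pair_pmf (sym_bern (\<chi> i j. Lstar$i$j + Sstar$i$j + Sstar$j$i)) (sym_bern Pi)) {(A, \<Omega>). \<forall>Sh Lh. is_estimator lam1 lam2 \<rho> A \<Omega> Sh Lh \<longrightarrow>
               \<bar>frob_inner
                  (\<chi> i j. if i \<in> Iset \<and> j \<in> Iset then 0
                          else \<Omega>$i$j * (A$i$j - Sh$i$j - Sh$j$i))
                  (Lstar - Lh)\<bar>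
               \<le> 16 * \<nu>t * \<gamma> * \<rho> * real n * real s}"
    unfolding sb1 sb2 map_pair[symmetric] by simp
  finally show ?thesis .
qed

end
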